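(* Let $P_1$ and $P_2$ be a pair of compatible polygons (possibly with holes). Suppose that $P_1$ contains a dent $u,d,v$ (with peak $d$), and let $\Psi$ be the visibility region of $d$ in $P_1$. If $u$ and $v$ are not visible in $P_2$, then in any pair of compatible triangulations $T(P_1)$, $T(P_2)$ of $P_1$, $P_2$, the vertex $d$ is adjacent in $T(P_1)$ either to a Steiner point or to a vertex of $P_1$ other than $u$ and $v$ lying inside $\Psi$.
   Context: All polygons are vertex-labelled straight-line polygons in the plane; a polygon may have holes (a polygonal region), and a hole may degenerate to a single point. Two polygons are compatible if they have the same clockwise cyclic ordering of (labelled) vertices; two polygonal regions are compatible if their outer polygons are compatible and their holes correspond (via the labelling) to compatible holes. A triangulation $T(P)$ of a polygonal region $P$ is a subdivision of its interior into triangular faces (straight-line edges); the vertices of $T(P)$ that are not vertices of $P$ are called Steiner points. Two triangulations $T(P_1)$, $T(P_2)$ of compatible regions are compatible if every face of $T(P_1)$, considered as a labelled polygon, corresponds to a compatible face of $T(P_2)$, the labelling providing the correspondence (Steiner points are labelled so that they correspond between the two triangulations). Two points $a,b$ of $P$ are visible if the line segment between them lies strictly inside $P$. A dent on the boundary of $P$ consists of three consecutive vertices $u,d,v$ of $P$ such that $d$ is a convex vertex and $u,v$ are reflex vertices; $d$ is called the peak of the dent. The visibility region of $d$ is the set of all points inside $P$ that are visible to $d$. *)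

theory Defs
  imports "HOL-Analysis.Analysis"
begin

text \<open>A polygonal region is given by a list of
labels for the outer boundary cycle, a list of label lists for the holes, and a position map.
Convention: outer boundary listed clockwise, holes (with at least 3 vertices) listed
counterclockwise, so the region lies to the right when walking along any boundary cycle.\<close>

definition cross :: "complex \<Rightarrow> complex \<Rightarrow> real" where
  "cross a b = Im (cnj a * b)"

definition cyc_pt :: "'w list \<Rightarrow> nat \<Rightarrow> 'w" where
  "cyc_pt c i = c ! (i mod length c)"

definition cycle_bd :: "('w \<Rightarrow> complex) \<Rightarrow> 'w list \<Rightarrow> complex set" where
  "cycle_bd p c = (if length c = 1 then {p (hd c)}
     else (\<Union>i<length c. closed_segment (p (cyc_pt c i)) (p (cyc_pt c (Suc i)))))"

definition filled :: "('w \<Rightarrow> complex) \<Rightarrow> 'w list \<Rightarrow> complex set" where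
  "filled p c = cycle_bd p c \<union> inside (cycle_bd p c)"

definition simple_polygon :: "('w \<Rightarrow> complex) \<Rightarrow> 'w list \<Rightarrow> bool" where
  "simple_polygon p c \<longleftrightarrow> length c \<ge> 3 \<and> distinct c \<and> inj_on p (set c) \<and>
     (\<forall>i<length c. \<forall>j<length c. i \<noteq> j \<longrightarrow>
        closed_segment (p (cyc_pt c i)) (p (cyc_pt c (Suc i))) \<inter>
        closed_segment (p (cyc_pt c j)) (p (cyc_pt c (Suc j)))
        \<subseteq> {p (cyc_pt c i), p (cyc_pt c (Suc i))} \<inter> {p (cyc_pt c j), p (cyc_pt c (Suc j))})"

definition signed_area :: "('w \<Rightarrow> complex) \<Rightarrow> 'w list \<Rightarrow> real" where
  "signed_area p c = (\<Sum>i<length c. cross (p (cyc_pt c i)) (p (cyc_pt c (Suc i)))) / 2"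

text \<open>Using the same label lists for two position maps and these
orientation conventions expresses compatibility of the two regions.\<close>
definition polygonal_region :: "('w \<Rightarrow> complex) \<Rightarrow> 'w list \<Rightarrow> 'w list list \<Rightarrow> bool" where
  "polygonal_region p outer holes \<longleftrightarrow>
     simple_polygon p outer \<and> signed_area p outer < 0 \<and>
     distinct (concat (outer # holes)) \<and>
     (\<forall>h\<in>set holes. length h = 1 \<or> (simple_polygon p h \<and> signed_area p h > 0)) \<and>
     (\<forall>h\<in>set holes. filled p h \<subseteq> inside (cycle_bd p outer)) \<and>
     (\<forall>i<length holes. \<forall>j<length holes. i \<noteq> j \<longrightarrow>
        filled p (holes ! i) \<inter> filled p (holes ! j) = {})"

definition poly_vertices :: "'w list \<Rightarrow> 'w list list \<Rightarrow> 'w set" where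
  "poly_vertices outer holes = set (concat (outer # holes))"

definition region_int :: "('w \<Rightarrow> complex) \<Rightarrow> 'w list \<Rightarrow> 'w list list \<Rightarrow> complex set" where
  "region_int p outer holes = inside (cycle_bd p outer) - (\<Union>h\<in>set holes. filled p h)"

definition region_cl :: "('w \<Rightarrow> complex) \<Rightarrow> 'w list \<Rightarrow> 'w list list \<Rightarrow> complex set" where
  "region_cl p outer holes = filled p outer - (\<Union>h\<in>set holes. inside (cycle_bd p h))"

definition visible :: "('w \<Rightarrow> complex) \<Rightarrow> 'w list \<Rightarrow> 'w list list \<Rightarrow> 'w \<Rightarrow> 'w \<Rightarrow> bool" where
  "visible p outer holes a b \<longleftrightarrow> open_segment (p a) (p b) \<subseteq> region_int p outer holes"

definition vis_region :: "('w \<Rightarrow> complex) \<Rightarrow> 'w list \<Rightarrow> 'w list list \<Rightarrow> 'w \<Rightarrow> complex set" where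
  "vis_region p outer holes d =
     {x \<in> region_cl p outer holes. open_segment (p d) x \<subseteq> region_int p outer holes}"

definition consecutive :: "'w list \<Rightarrow> 'w list list \<Rightarrow> 'w \<Rightarrow> 'w \<Rightarrow> 'w \<Rightarrow> bool" where
  "consecutive outer holes u d v \<longleftrightarrow> (\<exists>c\<in>set (outer # holes). length c \<ge> 3 \<and>
     (\<exists>i<length c. cyc_pt c i = u \<and> cyc_pt c (Suc i) = d \<and> cyc_pt c (Suc (Suc i)) = v))"

text \<open>Region lies to the right of each boundary cycle: convex = right turn, reflex = left turn.\<close>
definition convex_vertex :: "('w \<Rightarrow> complex) \<Rightarrow> 'w list \<Rightarrow> 'w list list \<Rightarrow> 'w \<Rightarrow> bool" where
  "convex_vertex p outer holes x \<longleftrightarrow> (\<exists>c\<in>set (outer # holes). length c \<ge> 3 \<and>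
     (\<exists>i<length c. cyc_pt c (Suc i) = x \<and>
        cross (p x - p (cyc_pt c i)) (p (cyc_pt c (Suc (Suc i))) - p x) < 0))"

definition reflex_vertex :: "('w \<Rightarrow> complex) \<Rightarrow> 'w list \<Rightarrow> 'w list list \<Rightarrow> 'w \<Rightarrow> bool" where
  "reflex_vertex p outer holes x \<longleftrightarrow> (\<exists>c\<in>set (outer # holes). length c \<ge> 3 \<and>
     (\<exists>i<length c. cyc_pt c (Suc i) = x \<and>
        cross (p x - p (cyc_pt c i)) (p (cyc_pt c (Suc (Suc i))) - p x) > 0))"

definition is_dent :: "('w \<Rightarrow> complex) \<Rightarrow> 'w list \<Rightarrow> 'w list list \<Rightarrow> 'w \<Rightarrow> 'w \<Rightarrow> 'w \<Rightarrow> bool" where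
  "is_dent p outer holes u d v \<longleftrightarrow> consecutive outer holes u d v \<and>
     convex_vertex p outer holes d \<and> reflex_vertex p outer holes u \<and> reflex_vertex p outer holes v"

text \<open>A triangulation: a finite set of faces (3-element label sets) with a position map q
extending p on the polygon vertices; labels not among polygon vertices are Steiner points.\<close>
definition triangulation :: "('w \<Rightarrow> complex) \<Rightarrow> 'w list \<Rightarrow> 'w list list \<Rightarrow> 'w set set \<Rightarrow> ('w \<Rightarrow> complex) \<Rightarrow> bool" where
  "triangulation p outer holes T q \<longleftrightarrow> finite T \<and>
     (\<forall>F\<in>T. card F = 3 \<and> \<not> collinear (q ` F)) \<and>
     (\<forall>F\<in>T. \<forall>G\<in>T. F \<noteq> G \<longrightarrow>
        convex hull (q ` F) \<inter> convex hull (q ` G) = convex hull (q ` (F \<inter> G))) \<and>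
     (\<Union>F\<in>T. convex hull (q ` F)) = region_cl p outer holes \<and>
     (\<forall>x\<in>poly_vertices outer holes. q x = p x \<and> (\<exists>F\<in>T. x \<in> F)) \<and>
     inj_on q (\<Union>T)"

definition compatible_faces :: "'w set set \<Rightarrow> ('w \<Rightarrow> complex) \<Rightarrow> ('w \<Rightarrow> complex) \<Rightarrow> bool" where
  "compatible_faces T q1 q2 \<longleftrightarrow> (\<forall>a b c. {a, b, c} \<in> T \<longrightarrow>
     sgn (cross (q1 b - q1 a) (q1 c - q1 a)) = sgn (cross (q2 b - q2 a) (q2 c - q2 a)))"

end

theory Submission
  imports Defs
begin


fun polyline :: "complex list \<Rightarrow> real \<Rightarrow> complex" where
  "polyline [] = linepath 0 0"
| "polyline [x] = linepath x x"
| "polyline [x,y] = linepath x y"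
| "polyline (x#y#z#r) = linepath x y +++ polyline (y#z#r)"

lemma polyline_start: "pathstart (polyline (x#r)) = x"
  by (induction "x#r" arbitrary: x r rule: polyline.induct) auto

lemma polyline_finish: "L \<noteq> [] \<Longrightarrow> pathfinish (polyline L) = last L"
  by (induction L rule: polyline.induct) auto

lemma UN_Suc_shift: "(\<Union>i<Suc n. f i) = f 0 \<union> (\<Union>i<n. f (Suc i))"
  by (simp add: lessThan_Suc_eq_insert_0)

lemma polyline_image:
  "length L \<ge> 2 \<Longrightarrow> path_image (polyline L) = (\<Union>i<length L - 1. closed_segment (L!i) (L!Suc i))"
proof (induction L rule: polyline.induct)
  case (4 x y z r)
  have "path_image (polyline (x#y#z#r)) = closed_segment x y \<union> path_image (polyline (y#z#r))"
    by (simp add: path_image_join polyline_start)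
  also have "\<dots> = closed_segment x y \<union> (\<Union>i<length r + 1. closed_segment ((y#z#r)!i) ((y#z#r)!Suc i))"
    using 4 by simp
  also have "\<dots> = (\<Union>i<length r + 2. closed_segment ((x#y#z#r)!i) ((x#y#z#r)!Suc i))"
    using UN_Suc_shift[where n="length r + 1" and f="\<lambda>i. closed_segment ((x#y#z#r)!i) ((x#y#z#r)!Suc i)"] by simp
  finally show ?case by simp
qed auto

lemma polyline_arc:
  assumes "length L \<ge> 2" "distinct L"
    "\<forall>i j. Suc i < length L \<longrightarrow> Suc j < length L \<longrightarrow> i \<noteq> j \<longrightarrow>
       closed_segment (L!i) (L!Suc i) \<inter> closed_segment (L!j) (L!Suc j) \<subseteq> {L!i, L!Suc i} \<inter> {L!j, L!Suc j}"
  shows "arc (polyline L)"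
  using assms
proof (induction L rule: polyline.induct)
  case (4 x y z r)
  have IH: "arc (polyline (y#z#r))"
    apply (rule 4(1))
    using 4(2-) apply simp_all
    apply (intro allI impI)
    subgoal for i j using 4(4)[rule_format, of "Suc i" "Suc j"] by simp
    done
  have "closed_segment x y \<inter> path_image (polyline (y#z#r)) \<subseteq> {y}"
  proof
    fix t assume t: "t \<in> closed_segment x y \<inter> path_image (polyline (y#z#r))"
    then obtain j where j: "j < length r + 1" "t \<in> closed_segment ((y#z#r)!j) ((y#z#r)!Suc j)"
      using polyline_image[of "y#z#r"] by auto
    have "t \<in> {x, y} \<inter> {(x#y#z#r)!Suc j, (x#y#z#r)!Suc (Suc j)}"
      using 4(4)[rule_format, of 0 "Suc j"] j t by auto
    moreover have "x \<noteq> (x#y#z#r)!Suc j" "x \<noteq> (x#y#z#r)!Suc (Suc j)"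
    proof -
      have "(x#y#z#r)!Suc j \<in> set (y#z#r)" "(x#y#z#r)!Suc (Suc j) \<in> set (y#z#r)"
        using j(1) nth_mem[of j "y#z#r"] nth_mem[of "Suc j" "y#z#r"] by simp_all
      then show "x \<noteq> (x#y#z#r)!Suc j" "x \<noteq> (x#y#z#r)!Suc (Suc j)" using 4(3) by auto
    qed
    ultimately show "t \<in> {y}" by auto
  qed
  then show ?case
    using IH 4(3) by (auto intro!: arc_join simp: polyline_start)
qed auto

lemma cyc_pt_lt: "i < length c \<Longrightarrow> cyc_pt c i = c ! i"
  by (simp add: cyc_pt_def)

lemma cyc_pt_last: "c \<noteq> [] \<Longrightarrow> cyc_pt c (length c) = c ! 0"
  by (simp add: cyc_pt_def)

lemma polygon_path:
  assumes sp: "simple_polygon p c"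
  obtains g where "simple_path g" "pathfinish g = pathstart g" "path_image g = cycle_bd p c"
proof -
  define n where "n = length c"
  define L where "L = map p c"
  have n3: "n \<ge> 3" and dc: "distinct c" and inj: "inj_on p (set c)"
    and seg: "\<And>i j. i<n \<Longrightarrow> j<n \<Longrightarrow> i \<noteq> j \<Longrightarrow>
        closed_segment (p (cyc_pt c i)) (p (cyc_pt c (Suc i))) \<inter>
        closed_segment (p (cyc_pt c j)) (p (cyc_pt c (Suc j)))
        \<subseteq> {p (cyc_pt c i), p (cyc_pt c (Suc i))} \<inter> {p (cyc_pt c j), p (cyc_pt c (Suc j))}"
    using sp unfolding simple_polygon_def n_def by auto
  have lenL: "length L = n" by (simp add: L_def n_def)
  have dL: "distinct L" using dc inj by (simp add: L_def distinct_map)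
  have Lnth: "\<And>i. i < n \<Longrightarrow> L ! i = p (cyc_pt c i)"
    by (simp add: L_def n_def cyc_pt_lt)
  have LSuc: "\<And>i. Suc i < n \<Longrightarrow> L ! Suc i = p (cyc_pt c (Suc i))"
    by (simp add: Lnth)
  have cn: "cyc_pt c n = c ! 0" using n3 by (simp add: n_def cyc_pt_def)
  have Llast: "L ! (n - 1) = p (cyc_pt c (n - 1))" using n3 Lnth by simp
  have L0: "L ! 0 = p (cyc_pt c n)" using n3 cn unfolding L_def n_def by (subst nth_map) auto
  define g1 where "g1 = polyline L"
  define g2 where "g2 = linepath (L ! (n - 1)) (L ! 0)"
  have cond: "\<forall>i j. Suc i < length L \<longrightarrow> Suc j < length L \<longrightarrow> i \<noteq> j \<longrightarrow>
       closed_segment (L!i) (L!Suc i) \<inter> closed_segment (L!j) (L!Suc j) \<subseteq> {L!i, L!Suc i} \<inter> {L!j, L!Suc j}"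
  proof (intro allI impI)
    fix i j assume ij: "Suc i < length L" "Suc j < length L" "i \<noteq> j"
    show "closed_segment (L ! i) (L ! Suc i) \<inter> closed_segment (L ! j) (L ! Suc j)
       \<subseteq> {L ! i, L ! Suc i} \<inter> {L ! j, L ! Suc j}"
      using seg[of i j] ij lenL Lnth[of i] Lnth[of j] LSuc[of i] LSuc[of j] by simp
  qed
  have arc1: "arc g1" unfolding g1_def
    using polyline_arc[OF _ dL cond] lenL n3 by simp
  have Lne: "L \<noteq> []" using lenL n3 by auto
  have lastL: "last L = L ! (n - 1)" using lenL Lne by (simp add: last_conv_nth)
  have hdL: "pathstart g1 = L ! 0" unfolding g1_def using Lne
    by (metis hd_Cons_tl nth_Cons_0 polyline_start)
  have ne: "L ! (n - 1) \<noteq> L ! 0" using dL lenL n3 by (simp add: nth_eq_iff_index_eq)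
  have arc2: "arc g2" unfolding g2_def using ne by simp
  have im1: "path_image g1 = (\<Union>i<n - 1. closed_segment (L!i) (L!Suc i))"
    unfolding g1_def using polyline_image[of L] lenL n3 by simp
  have im1': "path_image g1 = (\<Union>i<n - 1. closed_segment (p (cyc_pt c i)) (p (cyc_pt c (Suc i))))"
    unfolding im1 using Lnth LSuc by (intro SUP_cong) auto
  have im2: "path_image g2 = closed_segment (p (cyc_pt c (n-1))) (p (cyc_pt c (Suc (n-1))))"
    unfolding g2_def using Llast L0 n3 by (simp add: Suc_diff_1)
  have int: "path_image g1 \<inter> path_image g2 \<subseteq> {pathstart g1, pathstart g2}"
  proof
    fix t assume t: "t \<in> path_image g1 \<inter> path_image g2"
    then obtain j where j: "j < n - 1" "t \<in> closed_segment (p (cyc_pt c j)) (p (cyc_pt c (Suc j)))"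
      using im1' by auto
    have "t \<in> {p (cyc_pt c (n-1)), p (cyc_pt c (Suc (n-1)))}"
      using seg[of j "n-1"] j t im2 n3 by auto
    then show "t \<in> {pathstart g1, pathstart g2}"
      using hdL Llast L0 n3 unfolding g2_def by (auto simp: Suc_diff_1)
  qed
  have "simple_path (g1 +++ g2)"
    apply (rule simple_path_join_loop[OF arc1 arc2])
    using hdL lastL int Lne by (auto simp: g1_def g2_def polyline_finish)
  moreover have "pathfinish (g1 +++ g2) = pathstart (g1 +++ g2)"
    using hdL by (simp add: g2_def)
  moreover have "path_image (g1 +++ g2) = cycle_bd p c"
  proof -
    have "path_image (g1 +++ g2) = path_image g1 \<union> path_image g2"
      using lastL Lne by (simp add: path_image_join g1_def g2_def polyline_finish)
    also have "\<dots> = (\<Union>i<Suc (n - 1). closed_segment (p (cyc_pt c i)) (p (cyc_pt c (Suc i))))"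
      unfolding im1' im2 lessThan_Suc by auto
    also have "\<dots> = cycle_bd p c"
    proof -
      have "Suc (n - 1) = length c" using n3 by (simp add: n_def)
      then show ?thesis using n3 by (simp add: cycle_bd_def n_def)
    qed
    finally show ?thesis .
  qed
  ultimately show ?thesis using that by blast
qed

lemma polygon_closure:
  assumes "simple_polygon p c" "y \<in> cycle_bd p c"
  shows "y \<in> closure (inside (cycle_bd p c))" "y \<in> closure (outside (cycle_bd p c))"
proof -
  obtain g where g: "simple_path g" "pathfinish g = pathstart g" "path_image g = cycle_bd p c"
    using polygon_path[OF assms(1)] by blast
  from Jordan_inside_outside[OF g(1,2)] g(3) assms(2)
  show "y \<in> closure (inside (cycle_bd p c))" "y \<in> closure (outside (cycle_bd p c))"
    by (auto simp: frontier_def)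
qed



lemma cross_eq: "cross a b = Re a * Im b - Im a * Re b"
  by (simp add: cross_def)

lemma collinear_cross: "collinear {A,B,C} \<longleftrightarrow> cross (B-A) (C-A) = 0"
proof -
  have "collinear {A,B,C} = collinear {A,B,C}" ..
  have e: "{A,B,C} = {B,A,C}" by auto
  have "collinear {A,B,C} \<longleftrightarrow> collinear {0, B - A, C - A}"
    unfolding e by (rule collinear_3) simp
  also have "\<dots> \<longleftrightarrow> (C - A) / (B - A) \<in> \<real>" by (rule collinear_iff_Reals)
  also have "\<dots> \<longleftrightarrow> cross (B-A) (C-A) = 0"
    by (auto simp: complex_is_Real_iff Im_divide cross_eq field_simps)
  finally show ?thesis .
qed

lemma bary_sum:
  assumes "cross (B-A) (C-A) \<noteq> 0"
  shows "cross (B-z) (C-z) / cross (B-A) (C-A) + cross (C-z) (A-z) / cross (B-A) (C-A)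
       + cross (A-z) (B-z) / cross (B-A) (C-A) = 1"
proof -
  have "cross (B-z) (C-z) + cross (C-z) (A-z) + cross (A-z) (B-z) = cross (B-A) (C-A)"
    unfolding cross_eq by simp algebra
  then show ?thesis using assms by (simp add: add_divide_distrib[symmetric])
qed

lemma bary_id:
  assumes "cross (B-A) (C-A) \<noteq> 0"
  shows "z = (cross (B-z) (C-z) / cross (B-A) (C-A)) *\<^sub>R A + (cross (C-z) (A-z) / cross (B-A) (C-A)) *\<^sub>R B
       + (cross (A-z) (B-z) / cross (B-A) (C-A)) *\<^sub>R C"
proof -
  define D where "D = cross (B-A) (C-A)"
  have D: "D \<noteq> 0" using assms by (simp add: D_def)
  have r: "Re z * D = cross (B-z) (C-z) * Re A + cross (C-z) (A-z) * Re B + cross (A-z) (B-z) * Re C"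
    unfolding D_def cross_eq by simp algebra
  have i: "Im z * D = cross (B-z) (C-z) * Im A + cross (C-z) (A-z) * Im B + cross (A-z) (B-z) * Im C"
    unfolding D_def cross_eq by simp algebra
  show ?thesis unfolding D_def[symmetric] using r i D
    by (simp add: complex_eq_iff field_simps)
qed

lemma tri_interior:
  assumes D: "cross (B-A) (C-A) \<noteq> 0"
    and pos: "0 < cross (B-z) (C-z) / cross (B-A) (C-A)" "0 < cross (C-z) (A-z) / cross (B-A) (C-A)"
      "0 < cross (A-z) (B-z) / cross (B-A) (C-A)"
  shows "z \<in> interior (convex hull {A,B,C})"
proof -
  define D where "D = cross (B-A) (C-A)"
  define U where "U = {z. 0 < cross (B-z) (C-z) / D \<and> 0 < cross (C-z) (A-z) / D \<and> 0 < cross (A-z) (B-z) / D}"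
  have "open U" unfolding U_def cross_eq
    by (intro open_Collect_conj open_Collect_less continuous_intros) (use D in \<open>auto simp: D_def\<close>)
  moreover have "U \<subseteq> convex hull {A,B,C}"
  proof
    fix y assume y: "y \<in> U"
    show "y \<in> convex hull {A,B,C}"
      unfolding convex_hull_3
      apply (rule CollectI)
      apply (rule exI[of _ "cross (B-y) (C-y) / D"], rule exI[of _ "cross (C-y) (A-y) / D"],
             rule exI[of _ "cross (A-y) (B-y) / D"])
      using y bary_id[OF D, of y] bary_sum[OF D, of y] unfolding U_def D_def by auto
  qed
  moreover have "z \<in> U" using pos unfolding U_def D_def by auto
  ultimately show ?thesis using interior_maximal by blast
qed

lemma small_pos:
  fixes c a t m :: real
  assumes "0 < c" "0 < m" "m \<le> c / (\<bar>a\<bar> + 1) / 2" "\<bar>t\<bar> = m"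
  shows "0 < c + t * a"
proof -
  have "m * (\<bar>a\<bar> + 1) \<le> c / 2" using assms(3)
    by (simp add: field_simps)
  then have "m * \<bar>a\<bar> < c" using assms by (simp add: algebra_simps)
  moreover have "\<bar>t * a\<bar> = m * \<bar>a\<bar>" using assms by (simp add: abs_mult)
  ultimately show ?thesis by linarith
qed

lemma cross_enter:
  assumes D: "cross (B-A) (C-A) \<noteq> 0" and xAB: "x \<in> open_segment A B" and xPQ: "x \<in> open_segment P Q"
    and k: "cross (B-A) (Q-P) \<noteq> 0"
  shows "\<exists>y \<in> open_segment P Q. y \<in> interior (convex hull {A,B,C})"
proof -
  define D where "D = cross (B-A) (C-A)"
  have D0: "D \<noteq> 0" using D by (simp add: D_def)
  obtain s where s: "0 < s" "s < 1" "x = (1 - s) *\<^sub>R A + s *\<^sub>R B" using xAB by (auto simp: in_segment)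
  obtain r where r: "0 < r" "r < 1" "x = (1 - r) *\<^sub>R P + r *\<^sub>R Q" "P \<noteq> Q" using xPQ by (auto simp: in_segment)
  define w where "w = Q - P"
  define a1 where "a1 = cross (C-B) w / D"
  define b1 where "b1 = cross (A-C) w / D"
  define kk where "kk = cross (B-A) w / D"
  have kk0: "kk \<noteq> 0" using k D0 by (simp add: kk_def w_def)
  have ea: "\<And>t. cross (B - (x + t *\<^sub>R w)) (C - (x + t *\<^sub>R w)) = (1-s) * D + t * cross (C-B) w"
    unfolding s(3) D_def cross_eq by (simp add: scaleR_conv_of_real) algebra
  have eb: "\<And>t. cross (C - (x + t *\<^sub>R w)) (A - (x + t *\<^sub>R w)) = s * D + t * cross (A-C) w"
    unfolding s(3) D_def cross_eq by (simp add: scaleR_conv_of_real) algebra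
  have ec: "\<And>t. cross (A - (x + t *\<^sub>R w)) (B - (x + t *\<^sub>R w)) = t * cross (B-A) w"
    unfolding s(3) D_def cross_eq by (simp add: scaleR_conv_of_real) algebra
  define m where "m = min (min ((1-s)/(\<bar>a1\<bar>+1)/2) (s/(\<bar>b1\<bar>+1)/2)) (min r (1-r) / 2)"
  have m0: "0 < m" using s r by (simp add: m_def)
  have ma: "m \<le> (1-s)/(\<bar>a1\<bar>+1)/2" and mb: "m \<le> s/(\<bar>b1\<bar>+1)/2" unfolding m_def
    by (rule min.coboundedI1, rule min.cobounded1)+ (rule min.coboundedI1, rule min.cobounded2)
  define t where "t = (if kk > 0 then m else -m)"
  have tm: "\<bar>t\<bar> = m" using m0 by (simp add: t_def)
  define y where "y = x + t *\<^sub>R w"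
  have "y \<in> interior (convex hull {A,B,C})"
  proof (rule tri_interior[OF D])
    have "cross (B-y) (C-y) / D = (1-s) + t * a1" unfolding y_def ea a1_def using D0 by (simp add: field_simps)
    also have "0 < \<dots>" by (rule small_pos) (use s m0 tm ma in auto)
    finally show "0 < cross (B-y) (C-y) / cross (B-A) (C-A)" by (simp add: D_def)
    have "cross (C-y) (A-y) / D = s + t * b1" unfolding y_def eb b1_def using D0 by (simp add: field_simps)
    also have "0 < \<dots>" by (rule small_pos) (use s m0 tm mb in auto)
    finally show "0 < cross (C-y) (A-y) / cross (B-A) (C-A)" by (simp add: D_def)
    have "cross (A-y) (B-y) / D = t * kk" unfolding y_def ec kk_def using D0 by (simp add: field_simps)
    also have "0 < \<dots>" using kk0 m0 by (auto simp: t_def zero_less_mult_iff)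
    finally show "0 < cross (A-y) (B-y) / cross (B-A) (C-A)" by (simp add: D_def)
  qed
  moreover have "y \<in> open_segment P Q"
  proof -
    have "m \<le> min r (1-r) / 2" unfolding m_def by (rule min.cobounded2)
    then have "m < r" "m < 1 - r" using r by auto
    then have "0 < r + t" "r + t < 1" using tm by (auto simp: t_def split: if_splits)
    moreover have "y = (1 - (r + t)) *\<^sub>R P + (r + t) *\<^sub>R Q"
      unfolding y_def r(3) w_def by (simp add: algebra_simps)
    ultimately show ?thesis using r(4) by (auto simp: in_segment)
  qed
  ultimately show ?thesis by blast
qed

lemma cross_zero_par:
  assumes "cross u v = 0" "u \<noteq> 0"
  shows "\<exists>l::real. v = l *\<^sub>R u"
proof -
  define l where "l = (Re u * Re v + Im u * Im v) / ((Re u)^2 + (Im u)^2)"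
  have n: "(Re u)^2 + (Im u)^2 \<noteq> 0" using assms(2)
    by (metis complex_eq_iff power2_eq_square sum_power2_eq_zero_iff zero_complex.simps)
  have c: "Re u * Im v = Im u * Re v" using assms(1) by (simp add: cross_eq)
  have "Re v * ((Re u)^2 + (Im u)^2) = (Re u * Re v + Im u * Im v) * Re u"
    using c by (simp add: power2_eq_square algebra_simps)
  moreover have "Im v * ((Re u)^2 + (Im u)^2) = (Re u * Re v + Im u * Im v) * Im u"
    using c by (simp add: power2_eq_square algebra_simps)
  ultimately have "v = l *\<^sub>R u" using n
    by (simp add: complex_eq_iff l_def field_simps)
  then show ?thesis by blast
qed

lemma line_pt_open: "d \<noteq> 0 \<Longrightarrow> 0 < m \<Longrightarrow> m < 1 \<Longrightarrow> A + m *\<^sub>R d \<in> open_segment A (A + d)"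
  by (auto simp: in_segment algebra_simps intro!: exI[of _ m])

lemma line_pt_closed:
  fixes m sg tu :: real
  assumes "sg \<le> m" "m \<le> tu"
  shows "A + m *\<^sub>R d \<in> closed_segment (A + sg *\<^sub>R d) (A + tu *\<^sub>R d)"
proof (cases "sg = tu")
  case True then show ?thesis using assms by simp
next
  case False
  then have st: "sg < tu" using assms by simp
  define u where "u = (m - sg) / (tu - sg)"
  have "0 \<le> u" "u \<le> 1" using assms st by (auto simp: u_def field_simps)
  moreover have "A + m *\<^sub>R d = (1 - u) *\<^sub>R (A + sg *\<^sub>R d) + u *\<^sub>R (A + tu *\<^sub>R d)"
  proof -
    have "u * (tu - sg) = m - sg" using st by (simp add: u_def)
    then have "(1 - u) * sg + u * tu = m" by (simp add: algebra_simps)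
    have "(1 - u) *\<^sub>R (A + sg *\<^sub>R d) + u *\<^sub>R (A + tu *\<^sub>R d) = A + ((1 - u) * sg + u * tu) *\<^sub>R d"
      by (simp add: scaleR_conv_of_real algebra_simps)
    then show ?thesis using \<open>(1 - u) * sg + u * tu = m\<close> by simp
  qed
  ultimately show ?thesis by (auto simp: in_segment)
qed

lemma collinear_overlap:
  assumes xAB: "x \<in> open_segment A B" and xPQ: "x \<in> open_segment P Q" and k: "cross (B-A) (Q-P) = 0"
  shows "P \<in> open_segment A B \<or> Q \<in> open_segment A B \<or> (A \<in> closed_segment P Q \<and> B \<in> closed_segment P Q)"
proof -
  obtain s where s: "0 < s" "s < 1" "x = (1 - s) *\<^sub>R A + s *\<^sub>R B" "A \<noteq> B" using xAB by (auto simp: in_segment)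
  obtain r where r: "0 < r" "r < 1" "x = (1 - r) *\<^sub>R P + r *\<^sub>R Q" "P \<noteq> Q" using xPQ by (auto simp: in_segment)
  define d where "d = B - A"
  have d0: "d \<noteq> 0" using s(4) by (simp add: d_def)
  obtain l where l: "Q - P = l *\<^sub>R d" using cross_zero_par[OF k] d0 by (auto simp: d_def)
  define sg where "sg = s - r * l"
  define tu where "tu = s + (1 - r) * l"
  have xA: "x = A + s *\<^sub>R d" using s(3) by (simp add: d_def algebra_simps)
  have P: "P = A + sg *\<^sub>R d"
  proof -
    have "x = P + r *\<^sub>R (Q - P)" using r(3) by (simp add: algebra_simps)
    then show ?thesis using xA l by (simp add: sg_def algebra_simps)
  qed
  have Q: "Q = A + tu *\<^sub>R d"
  proof -
    have "Q = P + (Q - P)" by simp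
    then show ?thesis using P l by (simp add: sg_def tu_def algebra_simps)
  qed
  have B: "B = A + d" by (simp add: d_def)
  have sconv: "s = (1 - r) * sg + r * tu" by (simp add: sg_def tu_def algebra_simps)
  show ?thesis
  proof (cases "0 < sg \<and> sg < 1")
    case True then show ?thesis using line_pt_open[OF d0] P B by metis
  next
    case F1: False
    show ?thesis
    proof (cases "0 < tu \<and> tu < 1")
      case True then show ?thesis using line_pt_open[OF d0] Q B by metis
    next
      case F2: False
      have "(sg \<le> 0 \<and> 1 \<le> tu) \<or> (tu \<le> 0 \<and> 1 \<le> sg)"
      proof -
        have a: "sg \<le> 0 \<or> 1 \<le> sg" using F1 by auto
        have b: "tu \<le> 0 \<or> 1 \<le> tu" using F2 by auto
        have "\<not> (sg \<le> 0 \<and> tu \<le> 0)"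
        proof
          assume "sg \<le> 0 \<and> tu \<le> 0"
          then have "(1 - r) * sg \<le> 0" "r * tu \<le> 0" using r
            by (auto simp: mult_nonneg_nonpos)
          then show False using sconv s by linarith
        qed
        moreover have "\<not> (1 \<le> sg \<and> 1 \<le> tu)"
        proof
          assume "1 \<le> sg \<and> 1 \<le> tu"
          then have "(1 - r) * 1 \<le> (1 - r) * sg" "r * 1 \<le> r * tu" using r
            by (auto intro!: mult_left_mono)
          then have "(1 - r) * 1 + r * 1 \<le> (1 - r) * sg + r * tu" by (rule add_mono)
          then have "1 \<le> (1 - r) * sg + r * tu" by simp
          then show False using sconv s by linarith
        qed
        ultimately show ?thesis using a b by blast
      qed
      then show ?thesis
      proof
        assume h: "sg \<le> 0 \<and> 1 \<le> tu"
        have "A + 0 *\<^sub>R d \<in> closed_segment P Q" unfolding P Q by (rule line_pt_closed) (use h in auto)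
        moreover have "A + 1 *\<^sub>R d \<in> closed_segment P Q" unfolding P Q by (rule line_pt_closed) (use h in auto)
        ultimately show ?thesis using B by simp
      next
        assume h: "tu \<le> 0 \<and> 1 \<le> sg"
        have "A + 0 *\<^sub>R d \<in> closed_segment Q P" unfolding P Q by (rule line_pt_closed) (use h in auto)
        moreover have "A + 1 *\<^sub>R d \<in> closed_segment Q P" unfolding P Q by (rule line_pt_closed) (use h in auto)
        ultimately show ?thesis using B by (simp add: closed_segment_commute)
      qed
    qed
  qed
qed



lemma seg_collinear: fixes a b z :: complex shows "z \<in> closed_segment a b \<Longrightarrow> collinear {a, b, z}"
  using collinear_between_cases[of a b z] between_mem_segment by blast

lemma card3_split:
  assumes "card F = 3" "a \<in> F" "b \<in> F" "a \<noteq> b"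
  obtains e where "e \<noteq> a" "e \<noteq> b" "F = {a, b, e}"
proof -
  have fin: "finite F" using assms(1) by (metis card.infinite zero_neq_numeral)
  have "card (F - {a, b}) = 1" using assms fin by (simp add: card_Diff_subset)
  then obtain e where e: "F - {a, b} = {e}" by (meson card_1_singletonE)
  then have "F = {a, b, e}" "e \<noteq> a" "e \<noteq> b" using assms by auto
  then show ?thesis using that by blast
qed

lemma card3_split1:
  assumes "card F = 3" "z \<in> F"
  obtains g1 g2 where "g1 \<noteq> z" "g2 \<noteq> z" "F = {z, g1, g2}"
proof -
  have fin: "finite F" using assms(1) by (metis card.infinite zero_neq_numeral)
  have "card (F - {z}) = 2" using assms fin by simp
  then obtain g1 g2 where "F - {z} = {g1, g2}" "g1 \<noteq> g2" by (meson card_2_iff)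
  then show ?thesis using that assms(2) by blast
qed

lemma vertex_off_edge:
  assumes tri: "triangulation p outer holes T q" and F: "F \<in> T" "a \<in> F" "b \<in> F"
    and z: "z \<in> poly_vertices outer holes" and pz: "p z \<in> open_segment (q a) (q b)"
  shows False
proof -
  have T1: "\<And>F. F \<in> T \<Longrightarrow> card F = 3 \<and> \<not> collinear (q ` F)"
    and T2: "\<And>F G. F \<in> T \<Longrightarrow> G \<in> T \<Longrightarrow> F \<noteq> G \<Longrightarrow>
        convex hull (q ` F) \<inter> convex hull (q ` G) = convex hull (q ` (F \<inter> G))"
    and T4: "\<And>x. x \<in> poly_vertices outer holes \<Longrightarrow> q x = p x \<and> (\<exists>F\<in>T. x \<in> F)"
    using tri unfolding triangulation_def by auto
  obtain G where G: "G \<in> T" "z \<in> G" and qz: "q z = p z" using T4[OF z] by blast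
  have hF: "p z \<in> convex hull (q ` F)"
  proof -
    have "p z \<in> closed_segment (q a) (q b)" using pz open_closed_segment by blast
    also have "\<dots> = convex hull {q a, q b}" by (rule segment_convex_hull)
    also have "\<dots> \<subseteq> convex hull (q ` F)" using F by (intro hull_mono) auto
    finally show ?thesis .
  qed
  have zF: "z \<in> F"
  proof (rule ccontr)
    assume zn: "z \<notin> F"
    then have FG: "F \<noteq> G" using G by auto
    have "p z \<in> convex hull (q ` G)" using G qz by (metis hull_inc imageI)
    then have pzi: "p z \<in> convex hull (q ` (F \<inter> G))" using T2[OF F(1) G(1) FG] hF by blast
    obtain g1 g2 where g: "g1 \<noteq> z" "g2 \<noteq> z" "G = {z, g1, g2}" using card3_split1 T1[OF G(1)] G(2) by metis
    have "F \<inter> G \<subseteq> {g1, g2}" using g zn by auto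
    then have "convex hull (q ` (F \<inter> G)) \<subseteq> convex hull {q g1, q g2}" by (intro hull_mono) auto
    then have "p z \<in> convex hull {q g1, q g2}" using pzi by blast
    then have "q z \<in> closed_segment (q g1) (q g2)" using qz by (simp add: segment_convex_hull)
    then have "collinear {q g1, q g2, q z}" by (rule seg_collinear)
    moreover have "q ` G = {q g1, q g2, q z}" using g by auto
    ultimately show False using T1[OF G(1)] by simp
  qed
  have ab: "q a \<noteq> q b" using pz by auto
  have "q z \<noteq> q a" "q z \<noteq> q b" using pz qz by (auto simp: open_segment_def)
  then have "z \<noteq> a" "z \<noteq> b" by auto
  moreover have "a \<noteq> b" using ab by auto
  ultimately obtain e where "F = {a, b, e}" "e \<noteq> a" "e \<noteq> b" using card3_split T1[OF F(1)] F zF by metis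
  then have "F = {a, b, z}" using zF \<open>z \<noteq> a\<close> \<open>z \<noteq> b\<close> by auto
  moreover have "collinear {q a, q b, q z}"
    using pz qz by (intro seg_collinear) (simp add: open_closed_segment)
  ultimately show False using T1[OF F(1)] by simp
qed

lemma concat_unique:
  assumes "distinct (concat L)" "c \<in> set L" "c' \<in> set L" "x \<in> set c" "x \<in> set c'"
  shows "c = c'"
  using assms
proof (induction L)
  case (Cons h L)
  then show ?case by auto
qed simp

lemma region_bd:
  assumes "x \<in> region_cl p outer holes" "x \<notin> region_int p outer holes"
  shows "\<exists>c\<in>set (outer # holes). x \<in> cycle_bd p c"
  using assms unfolding region_cl_def region_int_def filled_def by auto

lemma bd_not_interior:
  assumes reg: "polygonal_region p outer holes" and c: "c \<in> set (outer # holes)" "length c \<noteq> 1"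
    and y: "y \<in> cycle_bd p c"
  shows "y \<notin> interior (region_cl p outer holes)"
proof
  assume yi: "y \<in> interior (region_cl p outer holes)"
  show False
  proof (cases "c = outer")
    case True
    have sp: "simple_polygon p outer" using reg by (simp add: polygonal_region_def)
    have cl: "y \<in> closure (outside (cycle_bd p outer))" using polygon_closure(2)[OF sp] y True by simp
    have "region_cl p outer holes \<inter> outside (cycle_bd p outer) = {}"
      unfolding region_cl_def filled_def using inside_Int_outside outside_no_overlap by blast
    then have "interior (region_cl p outer holes) \<inter> outside (cycle_bd p outer) = {}"
      using interior_subset by blast
    then have "interior (region_cl p outer holes) \<inter> closure (outside (cycle_bd p outer)) = {}"
      using open_Int_closure_eq_empty open_interior by blast
    then show False using cl yi by blast
  next
    case False
    then have ch: "c \<in> set holes" using c by simp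
    have sp: "simple_polygon p c" using reg ch c(2) by (auto simp: polygonal_region_def)
    have cl: "y \<in> closure (inside (cycle_bd p c))" using polygon_closure(1)[OF sp y] .
    have "region_cl p outer holes \<inter> inside (cycle_bd p c) = {}"
      unfolding region_cl_def using ch by blast
    then have "interior (region_cl p outer holes) \<inter> inside (cycle_bd p c) = {}"
      using interior_subset by blast
    then have "interior (region_cl p outer holes) \<inter> closure (inside (cycle_bd p c)) = {}"
      using open_Int_closure_eq_empty open_interior by blast
    then show False using cl yi by blast
  qed
qed

lemma cyc_pt_in: "c \<noteq> [] \<Longrightarrow> cyc_pt c i \<in> set c"
  by (simp add: cyc_pt_def)

lemma seg_in_bd: "length c \<noteq> 1 \<Longrightarrow> j < length c \<Longrightarrow>
   closed_segment (p (cyc_pt c j)) (p (cyc_pt c (Suc j))) \<subseteq> cycle_bd p c"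
  by (auto simp: cycle_bd_def)

lemma vertex_in_bd:
  assumes "a \<in> set c" shows "p a \<in> cycle_bd p c"
proof (cases "length c = 1")
  case True
  then obtain x where "c = [x]" by (metis One_nat_def length_0_conv length_Suc_conv)
  then show ?thesis using assms by (simp add: cycle_bd_def)
next
  case False
  obtain k where k: "k < length c" "c ! k = a" using assms by (meson in_set_conv_nth)
  then have "p a \<in> closed_segment (p (cyc_pt c k)) (p (cyc_pt c (Suc k)))"
    by (simp add: cyc_pt_def)
  then show ?thesis using seg_in_bd[OF False k(1)] by blast
qed

lemma bd_sub_filled: "cycle_bd p c \<subseteq> filled p c"
  by (simp add: filled_def)

lemma bd_disjoint:
  assumes reg: "polygonal_region p outer holes" and c: "c \<in> set (outer # holes)" "c' \<in> set (outer # holes)"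
    and ne: "c \<noteq> c'"
  shows "cycle_bd p c \<inter> cycle_bd p c' = {}"
proof -
  have H1: "\<And>h. h \<in> set holes \<Longrightarrow> cycle_bd p h \<subseteq> inside (cycle_bd p outer)"
    using reg bd_sub_filled unfolding polygonal_region_def by blast
  have H2: "\<And>i j. i < length holes \<Longrightarrow> j < length holes \<Longrightarrow> i \<noteq> j \<Longrightarrow>
      cycle_bd p (holes ! i) \<inter> cycle_bd p (holes ! j) = {}"
  proof -
    fix i j assume "i < length holes" "j < length holes" "i \<noteq> j"
    then have "filled p (holes ! i) \<inter> filled p (holes ! j) = {}"
      using reg unfolding polygonal_region_def by blast
    then show "cycle_bd p (holes ! i) \<inter> cycle_bd p (holes ! j) = {}"
      using bd_sub_filled by blast
  qed
  show ?thesis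
  proof (cases "c = outer")
    case True
    then have "c' \<in> set holes" using c ne by auto
    then show ?thesis using H1 True inside_no_overlap by blast
  next
    case F1: False
    then have ch: "c \<in> set holes" using c by auto
    show ?thesis
    proof (cases "c' = outer")
      case True
      then show ?thesis using H1[OF ch] inside_no_overlap by blast
    next
      case False
      then have "c' \<in> set holes" using c by auto
      then obtain i j where "i < length holes" "j < length holes" "holes ! i = c" "holes ! j = c'"
        using ch by (meson in_set_conv_nth)
      then show ?thesis using H2 ne by blast
    qed
  qed
qed

lemma vertex_on_edge:
  assumes reg: "polygonal_region p outer holes" and a: "a \<in> poly_vertices outer holes"
    and c: "c \<in> set (outer # holes)" and sp: "simple_polygon p c" and j: "j < length c"
    and pa: "p a \<in> closed_segment (p (cyc_pt c j)) (p (cyc_pt c (Suc j)))"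
  shows "a = cyc_pt c j \<or> a = cyc_pt c (Suc j)"
proof -
  have n3: "length c \<ge> 3" and inj: "inj_on p (set c)"
    and seg: "\<And>i j. i<length c \<Longrightarrow> j<length c \<Longrightarrow> i \<noteq> j \<Longrightarrow>
        closed_segment (p (cyc_pt c i)) (p (cyc_pt c (Suc i))) \<inter>
        closed_segment (p (cyc_pt c j)) (p (cyc_pt c (Suc j)))
        \<subseteq> {p (cyc_pt c i), p (cyc_pt c (Suc i))} \<inter> {p (cyc_pt c j), p (cyc_pt c (Suc j))}"
    using sp unfolding simple_polygon_def by auto
  obtain c' where c': "c' \<in> set (outer # holes)" "a \<in> set c'" using a unfolding poly_vertices_def by auto
  have "c' = c"
  proof (rule ccontr)
    assume "c' \<noteq> c"
    then have "cycle_bd p c' \<inter> cycle_bd p c = {}" using bd_disjoint[OF reg c'(1) c] by simp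
    moreover have "p a \<in> cycle_bd p c'" using vertex_in_bd c'(2) .
    moreover have "p a \<in> cycle_bd p c" using seg_in_bd[of c j p] n3 j pa by auto
    ultimately show False by blast
  qed
  then obtain k where k: "k < length c" "c ! k = a" using c'(2) by (meson in_set_conv_nth)
  have ck: "cyc_pt c k = a" using k by (simp add: cyc_pt_def)
  have cne: "c \<noteq> []" using n3 by auto
  show ?thesis
  proof (cases "k = j")
    case True then show ?thesis using ck by simp
  next
    case False
    have "p a \<in> closed_segment (p (cyc_pt c k)) (p (cyc_pt c (Suc k)))" using ck by simp
    then have "p a \<in> {p (cyc_pt c j), p (cyc_pt c (Suc j))}" using seg[OF k(1) j False] pa by blast
    moreover have "a \<in> set c" using k by auto
    ultimately show ?thesis using inj cyc_pt_in[OF cne] by (auto dest: inj_onD)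
  qed
qed

lemma diag_visible:
  assumes reg: "polygonal_region p outer holes" and tri: "triangulation p outer holes T q"
    and F: "F \<in> T" "a \<in> F" "b \<in> F" "a \<noteq> b"
    and av: "a \<in> poly_vertices outer holes" and bv: "b \<in> poly_vertices outer holes"
    and nc: "\<not> (\<exists>c\<in>set (outer # holes). \<exists>i<length c. {cyc_pt c i, cyc_pt c (Suc i)} = {a, b})"
  shows "open_segment (p a) (p b) \<subseteq> region_int p outer holes"
proof
  have T1: "\<And>F. F \<in> T \<Longrightarrow> card F = 3 \<and> \<not> collinear (q ` F)"
    and T3: "(\<Union>F\<in>T. convex hull (q ` F)) = region_cl p outer holes"
    and T4: "\<And>x. x \<in> poly_vertices outer holes \<Longrightarrow> q x = p x \<and> (\<exists>F\<in>T. x \<in> F)"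
    using tri unfolding triangulation_def by auto
  have qa: "q a = p a" and qb: "q b = p b" using T4 av bv by auto
  have hullF: "convex hull (q ` F) \<subseteq> region_cl p outer holes" using T3 F(1) by blast
  fix x assume x: "x \<in> open_segment (p a) (p b)"
  show "x \<in> region_int p outer holes"
  proof (rule ccontr)
    assume xn: "x \<notin> region_int p outer holes"
    have "x \<in> closed_segment (q a) (q b)" using x qa qb open_closed_segment by auto
    also have "\<dots> = convex hull {q a, q b}" by (rule segment_convex_hull)
    also have "\<dots> \<subseteq> convex hull (q ` F)" using F by (intro hull_mono) auto
    finally have "x \<in> region_cl p outer holes" using hullF by blast
    then obtain c where c: "c \<in> set (outer # holes)" "x \<in> cycle_bd p c" using region_bd xn by blast
    have nv: "\<And>z. z \<in> poly_vertices outer holes \<Longrightarrow> p z \<in> open_segment (p a) (p b) \<Longrightarrow> False"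
      using vertex_off_edge[OF tri F(1-3)] qa qb by metis
    have cv: "set c \<subseteq> poly_vertices outer holes" using c(1) unfolding poly_vertices_def by auto
    have l1: "length c \<noteq> 1"
    proof
      assume "length c = 1"
      then obtain h where "c = [h]" by (metis One_nat_def length_0_conv length_Suc_conv)
      then have "x = p h" "h \<in> poly_vertices outer holes" using c cv by (auto simp: cycle_bd_def)
      then show False using nv x by blast
    qed
    have sp: "simple_polygon p c"
      using reg c(1) l1 unfolding polygonal_region_def by auto
    have cne: "c \<noteq> []" using sp by (auto simp: simple_polygon_def)
    obtain j where j: "j < length c" and xs: "x \<in> closed_segment (p (cyc_pt c j)) (p (cyc_pt c (Suc j)))"
      using c(2) l1 by (auto simp: cycle_bd_def)
    define a' where "a' = cyc_pt c j"
    define b' where "b' = cyc_pt c (Suc j)"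
    have a'v: "a' \<in> poly_vertices outer holes" and b'v: "b' \<in> poly_vertices outer holes"
      using cyc_pt_in[OF cne] cv by (auto simp: a'_def b'_def)
    have xo: "x \<in> open_segment (p a') (p b')"
      using xs nv[OF a'v] nv[OF b'v] x unfolding open_segment_def a'_def b'_def by auto
    obtain e where e: "F = {a, b, e}" "e \<noteq> a" "e \<noteq> b" using card3_split T1[OF F(1)] F(2-4) by metis
    have qF: "q ` F = {p a, p b, q e}" using e qa qb by auto
    have D: "cross (p b - p a) (q e - p a) \<noteq> 0"
      using T1[OF F(1)] qF collinear_cross by metis
    show False
    proof (cases "cross (p b - p a) (p b' - p a') = 0")
      case False
      obtain y where y: "y \<in> open_segment (p a') (p b')" "y \<in> interior (convex hull {p a, p b, q e})"
        using cross_enter[OF D x xo False] by blast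
      have "y \<in> cycle_bd p c" using y(1) seg_in_bd[OF l1 j] open_closed_segment
        unfolding a'_def b'_def by blast
      moreover have "y \<in> interior (region_cl p outer holes)"
        using y(2) interior_mono[OF hullF] qF by auto
      ultimately show False using bd_not_interior[OF reg c(1) l1] by blast
    next
      case True
      from collinear_overlap[OF x xo True] show False
      proof (elim disjE conjE)
        assume "p a' \<in> open_segment (p a) (p b)" then show False using nv[OF a'v] by blast
      next
        assume "p b' \<in> open_segment (p a) (p b)" then show False using nv[OF b'v] by blast
      next
        assume ha: "p a \<in> closed_segment (p a') (p b')" and hb: "p b \<in> closed_segment (p a') (p b')"
        have "a = a' \<or> a = b'" using vertex_on_edge[OF reg av c(1) sp j] ha unfolding a'_def b'_def by blast
        moreover have "b = a' \<or> b = b'" using vertex_on_edge[OF reg bv c(1) sp j] hb unfolding a'_def b'_def by blast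
        ultimately have "{a', b'} = {a, b}" using F(4) by auto
        then show False using nc c(1) j unfolding a'_def b'_def by blast
      qed
    qed
  qed
qed



lemma mod_cancel_nat:
  fixes a b c n :: nat
  assumes "(a + b) mod n = (a + c) mod n"
  shows "b mod n = c mod n"
proof -
  have "(int a + int b) mod int n = (int a + int c) mod int n"
    using assms by (metis of_nat_add of_nat_mod)
  then have "((int a + int b) - int a) mod int n = ((int a + int c) - int a) mod int n"
    by (rule mod_diff_cong) simp
  then have "int b mod int n = int c mod int n" by simp
  then show ?thesis by (metis of_nat_eq_iff of_nat_mod)
qed

lemma cyc_pt_mod: "i mod length c = j mod length c \<Longrightarrow> cyc_pt c i = cyc_pt c j"
  by (simp add: cyc_pt_def)

lemma distinct_concat_mem: "distinct (concat L) \<Longrightarrow> c \<in> set L \<Longrightarrow> distinct c"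
  by (induction L) auto

lemma cyc_unique:
  assumes reg: "polygonal_region p outer holes"
    and c: "c \<in> set (outer # holes)" "c' \<in> set (outer # holes)" "c \<noteq> []" "c' \<noteq> []"
    and eq: "cyc_pt c i = cyc_pt c' j"
  shows "c' = c \<and> i mod length c = j mod length c"
proof -
  have dc: "distinct (concat (outer # holes))" using reg by (simp add: polygonal_region_def)
  have "c = c'" using concat_unique[OF dc c(1,2)] cyc_pt_in[OF c(3)] cyc_pt_in[OF c(4)] eq by metis
  moreover have "distinct c" using distinct_concat_mem[OF dc c(1)] .
  ultimately show ?thesis using eq c(3) by (simp add: cyc_pt_def nth_eq_iff_index_eq)
qed

lemma mod_Suc_cong: "i mod n = j mod n \<Longrightarrow> Suc i mod n = Suc j mod n"
  by (metis mod_Suc_eq)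

lemma mod_Suc_cancel: "Suc i mod n = Suc j mod n \<Longrightarrow> i mod n = j mod n"
  using mod_cancel_nat[of 1 i n j] by simp

theorem lemma1:
  fixes outer :: "'w list" and holes :: "'w list list"
    and p1 p2 q1 q2 :: "'w \<Rightarrow> complex" and T :: "'w set set" and u d v :: 'w
  assumes "polygonal_region p1 outer holes"
    and "polygonal_region p2 outer holes"
    and "is_dent p1 outer holes u d v"
    and "\<not> visible p2 outer holes u v"
    and "triangulation p1 outer holes T q1"
    and "triangulation p2 outer holes T q2"
    and "compatible_faces T q1 q2"
  shows "\<exists>w. w \<noteq> d \<and> (\<exists>F\<in>T. d \<in> F \<and> w \<in> F) \<and>
           (w \<notin> poly_vertices outer holes \<or>
            (w \<noteq> u \<and> w \<noteq> v \<and> p1 w \<in> vis_region p1 outer holes d))"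
proof -
  note reg1 = assms(1) and reg2 = assms(2) and tri1 = assms(5) and tri2 = assms(6)
  have dent: "consecutive outer holes u d v" "convex_vertex p1 outer holes d" "reflex_vertex p1 outer holes u"
    using assms(3) by (auto simp: is_dent_def)
  obtain c0 i0 where c0: "c0 \<in> set (outer # holes)" "length c0 \<ge> 3" "i0 < length c0"
    and cu: "cyc_pt c0 i0 = u" and cd: "cyc_pt c0 (Suc i0) = d" and cv: "cyc_pt c0 (Suc (Suc i0)) = v"
    using dent(1) unfolding consecutive_def by blast
  define n where "n = length c0"
  have n3: "n \<ge> 3" using c0 by (simp add: n_def)
  have c0ne: "c0 \<noteq> []" using c0 by auto
  have vert: "set c0 \<subseteq> poly_vertices outer holes" using c0(1) unfolding poly_vertices_def by auto
  have uV: "u \<in> poly_vertices outer holes" and dV: "d \<in> poly_vertices outer holes"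
    and vV: "v \<in> poly_vertices outer holes"
    using cyc_pt_in[OF c0ne] vert cu cd cv by blast+
  have uq: "\<And>c i k. c \<in> set (outer # holes) \<Longrightarrow> c \<noteq> [] \<Longrightarrow> cyc_pt c i = cyc_pt c0 k \<Longrightarrow>
              c = c0 \<and> k mod n = i mod n"
  proof -
    fix c i k assume "c \<in> set (outer # holes)" "c \<noteq> []" "cyc_pt c i = cyc_pt c0 k"
    then show "c = c0 \<and> k mod n = i mod n"
      using cyc_unique[OF reg1 c0(1) _ c0ne, of c k i] by (simp add: n_def)
  qed
  have cm: "\<And>i j. i mod n = j mod n \<Longrightarrow> cyc_pt c0 i = cyc_pt c0 j"
    using cyc_pt_mod n_def by metis
  have vd: "v \<noteq> d"
  proof
    assume "v = d"
    then have "c0 ! (Suc (Suc i0) mod n) = c0 ! (Suc i0 mod n)" using cd cv by (simp add: cyc_pt_def n_def)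
    then have "distinct c0 \<Longrightarrow> Suc (Suc i0) mod n = Suc i0 mod n" using c0ne
      nth_eq_iff_index_eq[of c0 "Suc (Suc i0) mod n" "Suc i0 mod n"] by (simp add: n_def)
    moreover have "distinct c0" using reg1 c0(1) distinct_concat_mem unfolding polygonal_region_def by blast
    ultimately have "Suc (Suc i0) mod n = Suc i0 mod n" by simp
    then have "(Suc i0 + 1) mod n = (Suc i0 + 0) mod n" by simp
    then have "1 mod n = 0 mod n" by (rule mod_cancel_nat)
    then show False using n3 by simp
  qed
  have not3: "n \<noteq> 3"
  proof
    assume n3': "n = 3"
    obtain c i where c: "c \<in> set (outer # holes)" "length c \<ge> 3" "i < length c" "cyc_pt c (Suc i) = d"
      and cr: "cross (p1 d - p1 (cyc_pt c i)) (p1 (cyc_pt c (Suc (Suc i))) - p1 d) < 0"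
      using dent(2) unfolding convex_vertex_def by blast
    have "c \<noteq> []" using c(2) by auto
    then have "c = c0 \<and> Suc i0 mod n = Suc i mod n" using uq[OF c(1), of "Suc i" "Suc i0"] c(4) cd by simp
    then have cc: "c = c0" and m: "Suc i mod n = Suc i0 mod n" by auto
    have "cyc_pt c i = u" using cc cm[OF mod_Suc_cancel[OF m]] cu by simp
    moreover have "cyc_pt c (Suc (Suc i)) = v" using cc cm[OF mod_Suc_cong[OF m]] cv by simp
    ultimately have cr1: "cross (p1 d - p1 u) (p1 v - p1 d) < 0" using cr by simp
    obtain c' i' where c': "c' \<in> set (outer # holes)" "length c' \<ge> 3" "i' < length c'" "cyc_pt c' (Suc i') = u"
      and cr': "cross (p1 u - p1 (cyc_pt c' i')) (p1 (cyc_pt c' (Suc (Suc i'))) - p1 u) > 0"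
      using dent(3) unfolding reflex_vertex_def by blast
    have "c' \<noteq> []" using c'(2) by auto
    then have "c' = c0 \<and> i0 mod n = Suc i' mod n" using uq[OF c'(1), of "Suc i'" "i0"] c'(4) cu by simp
    then have cc': "c' = c0" and m': "Suc i' mod n = i0 mod n" by auto
    have "i' mod n = Suc (Suc i0) mod n"
    proof -
      have "Suc i' mod n = Suc (Suc (Suc i0)) mod n" using m' n3' by simp
      then show ?thesis by (rule mod_Suc_cancel)
    qed
    then have "cyc_pt c' i' = v" using cc' cv cm by metis
    moreover have "Suc (Suc i') mod n = Suc i0 mod n" using mod_Suc_cong[OF m'] by simp
    then have "cyc_pt c' (Suc (Suc i')) = d" using cc' cd cm by metis
    ultimately have cr2: "cross (p1 u - p1 v) (p1 d - p1 u) > 0" using cr' by simp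
    have "cross (p1 u - p1 v) (p1 d - p1 u) = cross (p1 d - p1 u) (p1 v - p1 d)"
      unfolding cross_eq by simp algebra
    then show False using cr1 cr2 by simp
  qed
  have T4: "\<And>x. x \<in> poly_vertices outer holes \<Longrightarrow> q1 x = p1 x \<and> (\<exists>F\<in>T. x \<in> F)"
    and T3: "(\<Union>F\<in>T. convex hull (q1 ` F)) = region_cl p1 outer holes"
    and T1: "\<And>F. F \<in> T \<Longrightarrow> card F = 3 \<and> \<not> collinear (q1 ` F)"
    using tri1 unfolding triangulation_def by auto
  show ?thesis
  proof (cases "\<exists>F\<in>T. \<exists>w\<in>F. d \<in> F \<and> w \<noteq> d \<and> w \<noteq> u \<and> w \<noteq> v")
    case True
    then obtain F w where F: "F \<in> T" "w \<in> F" "d \<in> F" and w: "w \<noteq> d" "w \<noteq> u" "w \<noteq> v" by blast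
    show ?thesis
    proof (cases "w \<in> poly_vertices outer holes")
      case False then show ?thesis using F w by blast
    next
      case wV: True
      have nc: "\<not> (\<exists>c\<in>set (outer # holes). \<exists>i<length c. {cyc_pt c i, cyc_pt c (Suc i)} = {d, w})"
      proof
        assume "\<exists>c\<in>set (outer # holes). \<exists>i<length c. {cyc_pt c i, cyc_pt c (Suc i)} = {d, w}"
        then obtain c i where c: "c \<in> set (outer # holes)" "i < length c"
          and e: "{cyc_pt c i, cyc_pt c (Suc i)} = {d, w}" by blast
        have cne: "c \<noteq> []" using c by auto
        have "(cyc_pt c i = d \<and> cyc_pt c (Suc i) = w) \<or> (cyc_pt c i = w \<and> cyc_pt c (Suc i) = d)"
          using e w(1) by (auto simp: doubleton_eq_iff)
        then show False
        proof
          assume h: "cyc_pt c i = d \<and> cyc_pt c (Suc i) = w"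
          then have a: "c = c0 \<and> Suc i0 mod n = i mod n" using uq[OF c(1) cne, of i "Suc i0"] cd h by simp
          then have "Suc i mod n = Suc (Suc i0) mod n" using mod_Suc_cong[of i n "Suc i0"] by simp
          then have "cyc_pt c (Suc i) = v" using cv a cm by metis
          then show False using h w by simp
        next
          assume h: "cyc_pt c i = w \<and> cyc_pt c (Suc i) = d"
          then have a: "c = c0 \<and> Suc i0 mod n = Suc i mod n" using uq[OF c(1) cne, of "Suc i" "Suc i0"] cd h by simp
          then have "i mod n = i0 mod n" using mod_Suc_cancel[of i n i0] by simp
          then have "cyc_pt c i = u" using cu a cm by metis
          then show False using h w by simp
        qed
      qed
      have vis: "open_segment (p1 d) (p1 w) \<subseteq> region_int p1 outer holes"
        using diag_visible[OF reg1 tri1 F(1,3,2) w(1)[symmetric] dV wV nc] .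
      have "p1 w \<in> convex hull (q1 ` F)" using T4[OF wV] F(2) by (metis hull_inc imageI)
      then have "p1 w \<in> region_cl p1 outer holes" using T3 F(1) by blast
      then have "p1 w \<in> vis_region p1 outer holes d" using vis by (simp add: vis_region_def)
      then show ?thesis using F w by blast
    qed
  next
    case False
    obtain F0 where F0: "F0 \<in> T" "d \<in> F0" using T4[OF dV] by blast
    have sub: "F0 \<subseteq> {d, u, v}" using False F0 by blast
    have c3: "card F0 = 3" using T1[OF F0(1)] by simp
    have "card {d, u, v} \<le> 3" by (rule card_insert_le_m1) (auto simp: card_insert_le_m1)
    then have "F0 = {d, u, v}" using sub c3 by (metis card_seteq finite.emptyI finite.insertI)
    then have uF: "u \<in> F0" "v \<in> F0" and uv: "u \<noteq> v" using c3 by (auto simp: card_insert_if split: if_splits)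
    have nc: "\<not> (\<exists>c\<in>set (outer # holes). \<exists>i<length c. {cyc_pt c i, cyc_pt c (Suc i)} = {u, v})"
    proof
      assume "\<exists>c\<in>set (outer # holes). \<exists>i<length c. {cyc_pt c i, cyc_pt c (Suc i)} = {u, v}"
      then obtain c i where c: "c \<in> set (outer # holes)" "i < length c"
        and e: "{cyc_pt c i, cyc_pt c (Suc i)} = {u, v}" by blast
      have cne: "c \<noteq> []" using c by auto
      have "(cyc_pt c i = u \<and> cyc_pt c (Suc i) = v) \<or> (cyc_pt c i = v \<and> cyc_pt c (Suc i) = u)"
        using e uv by (auto simp: doubleton_eq_iff)
      then show False
      proof
        assume h: "cyc_pt c i = u \<and> cyc_pt c (Suc i) = v"
        then have a: "c = c0 \<and> i0 mod n = i mod n" using uq[OF c(1) cne, of i i0] cu h by simp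
        then have "Suc i mod n = Suc i0 mod n" using mod_Suc_cong[of i n i0] by simp
        then have "cyc_pt c (Suc i) = d" using cd a cm by metis
        then show False using h vd by simp
      next
        assume h: "cyc_pt c i = v \<and> cyc_pt c (Suc i) = u"
        then have a1: "c = c0 \<and> Suc (Suc i0) mod n = i mod n" using uq[OF c(1) cne, of i "Suc (Suc i0)"] cv h by simp
        have a2: "i0 mod n = Suc i mod n" using uq[OF c(1) cne, of "Suc i" i0] cu h by simp
        have "Suc (Suc (Suc i0)) mod n = Suc i mod n" using a1 mod_Suc_cong[of "Suc (Suc i0)" n i] by simp
        moreover have "Suc (Suc (Suc i0)) = i0 + 3" by simp
        ultimately have "(i0 + 3) mod n = (i0 + 0) mod n" using a2 by simp
        then have "3 mod n = 0 mod n" by (rule mod_cancel_nat)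
        then have "n dvd 3" by (simp add: mod_eq_0_iff_dvd)
        then have "n = 3" using n3 by (metis dvd_imp_le le_antisym zero_less_numeral)
        then show False using not3 by simp
      qed
    qed
    have "open_segment (p2 u) (p2 v) \<subseteq> region_int p2 outer holes"
      using diag_visible[OF reg2 tri2 F0(1) uF uv uV vV nc] .
    then show ?thesis using assms(4) by (simp add: visible_def)
  qed
qed


end
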